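(* Let $\theta>0$ and let $(Z_{ij}: i,j\in\mathbb{Z})$ be a real stationary Gaussian process with mean $\theta$ and covariance kernel $R(i,j)=\mathrm{Cov}(Z_{00},Z_{ij})$ satisfying $\sum_{i,j\in\mathbb{Z}}|R(i,j)|<\infty$ and $\sum_{i,j\in\mathbb{Z}}R(i,j)\neq0$. Let $X_{ij}=Z_{ij}-\theta$ and let $W_N$ be the $N\times N$ symmetric random matrix with entries $W_N(i,j)=X_{ij}+X_{ji}$, $1\le i,j\le N$. Then the family $\{N^{-1/2}\|W_N\|: N=1,2,\ldots\}$ is stochastically tight, i.e. $\|W_N\|=O_p(\sqrt N)$, where $\|\cdot\|$ denotes the operator norm $\|M\|=\max_{x\in\mathbb{R}^N,\|x\|=1}\|Mx\|$ with respect to the Euclidean norm.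
   Context: Stationarity means the law of the process is invariant under shifts of the index set $\mathbb{Z}^2$, so $\mathrm{Cov}(Z_{ij},Z_{kl})=R(k-i,l-j)$. Equivalently $W_N=A_N-\mathrm{E}(A_N)$ where $A_N(i,j)=Z_{ij}+Z_{ji}$. A family $(Y_N)$ is $O_p(a_N)$ if $\lim_{t\to\infty}\sup_N P(|Y_N|>t a_N)=0$. *)

theory Defs
  imports "HOL-Probability.Probability"
begin

definition gaussian_rv :: "'a measure \<Rightarrow> ('a \<Rightarrow> real) \<Rightarrow> bool" where
  "gaussian_rv M Y \<longleftrightarrow> Y \<in> borel_measurable M \<and>
     ((\<exists>\<mu> \<sigma>. \<sigma> > 0 \<and> distributed M lborel Y (normal_density \<mu> \<sigma>)) \<or>
      (\<exists>c. AE \<omega> in M. Y \<omega> = c))"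

definition gaussian_process :: "'a measure \<Rightarrow> ('i \<Rightarrow> 'a \<Rightarrow> real) \<Rightarrow> bool" where
  "gaussian_process M Z \<longleftrightarrow> (\<forall>i. Z i \<in> borel_measurable M) \<and>
     (\<forall>(S::'i set) (c::'i \<Rightarrow> real). finite S \<longrightarrow> gaussian_rv M (\<lambda>\<omega>. \<Sum>s\<in>S. c s * Z s \<omega>))"

definition stationary_Z2 :: "'a measure \<Rightarrow> (int \<times> int \<Rightarrow> 'a \<Rightarrow> real) \<Rightarrow> bool" where
  "stationary_Z2 M Z \<longleftrightarrow>
     (\<forall>(n::nat) (idx :: nat \<Rightarrow> int \<times> int) (h :: int \<times> int).
        distr M (Pi\<^sub>M {..<n} (\<lambda>_. borel)) (\<lambda>\<omega>. \<lambda>k\<in>{..<n}. Z (idx k) \<omega>) =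
        distr M (Pi\<^sub>M {..<n} (\<lambda>_. borel)) (\<lambda>\<omega>. \<lambda>k\<in>{..<n}. Z (idx k + h) \<omega>))"

definition op_norm :: "nat \<Rightarrow> (int \<Rightarrow> int \<Rightarrow> real) \<Rightarrow> real" where
  "op_norm N A = Sup {sqrt (\<Sum>i=1..int N. (\<Sum>j=1..int N. A i j * x j)\<^sup>2) | x :: int \<Rightarrow> real.
                        (\<Sum>j=1..int N. (x j)\<^sup>2) = 1}"

end

theory Submission
  imports Defs "HOL-Real_Asymp.Real_Asymp"
begin

lemma fact2: "fact (2*k) \<le> (2*k)^k * (fact k :: nat)"
proof -
  have "fact (2*k) div fact k \<le> (2*k)^k" using fact_div_fact_le_pow[of k "2*k"] by simp
  moreover have "fact k dvd (fact (2*k) :: nat)" by (simp add: fact_dvd)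
  ultimately show ?thesis by (metis dvd_mult_div_cancel mult.commute mult_le_mono1)
qed


lemma gauss_shift:
  assumes P: "prob_space M" and G: "gaussian_rv M Y"
  shows "gaussian_rv M (\<lambda>\<omega>. Y \<omega> + b)"
proof -
  interpret prob_space M by fact
  have m: "Y \<in> borel_measurable M" using G by (simp add: gaussian_rv_def)
  show ?thesis
  proof (cases "\<exists>\<mu> \<sigma>. \<sigma> > 0 \<and> distributed M lborel Y (normal_density \<mu> \<sigma>)")
    case True
    then obtain \<mu> \<sigma> where s: "\<sigma> > 0" and D: "distributed M lborel Y (normal_density \<mu> \<sigma>)" by blast
    have "distributed M lborel (\<lambda>x. b + 1 * Y x) (normal_density (b + 1 * \<mu>) (\<bar>1\<bar> * \<sigma>))"
      by (rule normal_density_affine[OF D s]) simp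
    then have "distributed M lborel (\<lambda>x. Y x + b) (normal_density (b + \<mu>) \<sigma>)"
      by (simp add: add.commute)
    then show ?thesis using m s unfolding gaussian_rv_def by auto
  next
    case False
    then obtain c where "AE \<omega> in M. Y \<omega> = c" using G unfolding gaussian_rv_def by blast
    then have "AE \<omega> in M. Y \<omega> + b = c + b" by auto
    then show ?thesis using m unfolding gaussian_rv_def by auto
  qed
qed

lemma gauss_moment:
  assumes P: "prob_space M" and G: "gaussian_rv M Y" and E: "prob_space.expectation M Y = 0" and kp: "k > 0"
  shows "integrable M (\<lambda>\<omega>. Y \<omega> ^ (2*k)) \<and>
    prob_space.expectation M (\<lambda>\<omega>. Y \<omega> ^ (2*k)) \<le> (real k * prob_space.expectation M (\<lambda>\<omega>. Y \<omega> ^ 2))^k"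
proof -
  interpret prob_space M by fact
  have m[measurable]: "Y \<in> borel_measurable M" using G by (simp add: gaussian_rv_def)
  show ?thesis
  proof (cases "\<exists>\<mu> \<sigma>. \<sigma> > 0 \<and> distributed M lborel Y (normal_density \<mu> \<sigma>)")
    case True
    then obtain \<mu> \<sigma> where s: "\<sigma> > 0" and D: "distributed M lborel Y (normal_density \<mu> \<sigma>)" by blast
    have "\<mu> = 0" using normal_distributed_expectation[OF s D] E by simp
    with D have D0: "distributed M lborel Y (normal_density 0 \<sigma>)" by simp
    have mom: "\<And>j. integrable M (\<lambda>\<omega>. Y \<omega> ^ (2*j)) \<and> expectation (\<lambda>\<omega>. Y \<omega> ^ (2*j)) = fact (2 * j) / ((2 / \<sigma>\<^sup>2)^j * fact j)"
    proof -
      fix j :: nat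
      have hb: "has_bochner_integral lborel (\<lambda>x. normal_density 0 \<sigma> x * x ^ (2 * j)) (fact (2 * j) / ((2 / \<sigma>\<^sup>2)^j * fact j))"
        using normal_moment_even[of \<sigma> 0 j] s by simp
      have "integrable M (\<lambda>\<omega>. Y \<omega> ^ (2*j))"
        using distributed_integrable[OF D0, of "\<lambda>x. x ^ (2*j)"] hb by (auto simp: has_bochner_integral_iff)
      moreover have "expectation (\<lambda>\<omega>. Y \<omega> ^ (2*j)) = fact (2 * j) / ((2 / \<sigma>\<^sup>2)^j * fact j)"
        using distributed_integral[OF D0, of "\<lambda>x. x ^ (2*j)"] hb by (auto simp: has_bochner_integral_iff)
      ultimately show "?thesis j" by simp
    qed
    have e2: "expectation (\<lambda>\<omega>. Y \<omega> ^ 2) = \<sigma>\<^sup>2"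
      using mom[of 1] s by simp
    have f: "real (fact (2*k)) \<le> real ((2*k)^k * fact k)"
      using fact2[of k] by linarith
    have fk: "real (fact k) > 0" by simp
    have "fact (2 * k) / ((2 / \<sigma>\<^sup>2)^k * fact k) = (real (fact (2*k)) / real (fact k)) * (\<sigma>\<^sup>2 / 2)^k"
      using s by (simp add: power_divide)
    also have "\<dots> \<le> (real ((2*k)^k)) * (\<sigma>\<^sup>2 / 2)^k"
    proof (rule mult_right_mono)
      show "real (fact (2*k)) / real (fact k) \<le> real ((2*k)^k)"
        using f fk by (simp add: divide_le_eq del: of_nat_fact)
    qed simp
    also have "\<dots> = (real (2*k) * (\<sigma>\<^sup>2 / 2))^k"
      by (simp add: power_mult_distrib power_divide)
    also have "real (2*k) * (\<sigma>\<^sup>2 / 2) = real k * \<sigma>\<^sup>2" by simp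
    finally show ?thesis using mom[of k] e2 by simp
  next
    case False
    then obtain c where A: "AE \<omega> in M. Y \<omega> = c" using G unfolding gaussian_rv_def by blast
    have "expectation Y = expectation (\<lambda>_. c)" by (rule integral_cong_AE) (use A in auto)
    then have "c = 0" using E prob_space by simp
    with A kp have A0: "AE \<omega> in M. Y \<omega> ^ (2*k) = 0" by auto
    have "integrable M (\<lambda>\<omega>. Y \<omega> ^ (2*k))"
      by (rule integrable_cong_AE_imp[where g="\<lambda>_. 0"]) (use A0 in auto)
    moreover have "expectation (\<lambda>\<omega>. Y \<omega> ^ (2*k)) = expectation (\<lambda>_. 0::real)"
      by (rule integral_cong_AE) (use A0 in auto)
    moreover have "0 \<le> expectation (\<lambda>\<omega>. Y \<omega> ^ 2)" by (rule integral_nonneg_AE) auto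
    ultimately show ?thesis by simp
  qed
qed


lemma cov_stat:
  fixes Z :: "int \<times> int \<Rightarrow> 'a \<Rightarrow> real"
  assumes P: "prob_space M" and meas: "\<And>i. Z i \<in> borel_measurable M" and St: "stationary_Z2 M Z"
  shows "prob_space.expectation M (\<lambda>\<omega>. (Z p \<omega> - \<theta>) * (Z q \<omega> - \<theta>)) =
         prob_space.expectation M (\<lambda>\<omega>. (Z (0,0) \<omega> - \<theta>) * (Z (q - p) \<omega> - \<theta>))"
proof -
  interpret prob_space M by fact
  define idx where "idx = (\<lambda>k::nat. if k = 0 then p else q)"
  define PM where "PM = (Pi\<^sub>M {..<(2::nat)} (\<lambda>_. (borel :: real measure)))"
  define F1 where "F1 = (\<lambda>\<omega>. \<lambda>k\<in>{..<(2::nat)}. Z (idx k) \<omega>)"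
  define F2 where "F2 = (\<lambda>\<omega>. \<lambda>k\<in>{..<(2::nat)}. Z (idx k + (- p)) \<omega>)"
  have eq: "distr M PM F1 = distr M PM F2"
    using St unfolding stationary_Z2_def PM_def F1_def F2_def by blast
  define g where "g = (\<lambda>x::nat \<Rightarrow> real. (x 0 - \<theta>) * (x 1 - \<theta>))"
  have gm: "g \<in> borel_measurable PM" unfolding g_def PM_def by measurable
  have m1: "F1 \<in> measurable M PM" unfolding F1_def PM_def
    by (intro measurable_restrict meas)
  have m2: "F2 \<in> measurable M PM" unfolding F2_def PM_def
    by (intro measurable_restrict meas)
  have "integral\<^sup>L (distr M PM F1) g = integral\<^sup>L (distr M PM F2) g" using eq by simp
  then have "expectation (\<lambda>\<omega>. g (F1 \<omega>)) = expectation (\<lambda>\<omega>. g (F2 \<omega>))"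
    using integral_distr[OF m1 gm] integral_distr[OF m2 gm] by simp
  moreover have "(\<lambda>\<omega>. g (F1 \<omega>)) = (\<lambda>\<omega>. (Z p \<omega> - \<theta>) * (Z q \<omega> - \<theta>))"
    by (simp add: g_def F1_def idx_def)
  moreover have "(\<lambda>\<omega>. g (F2 \<omega>)) = (\<lambda>\<omega>. (Z (0,0) \<omega> - \<theta>) * (Z (q - p) \<omega> - \<theta>))"
    by (simp add: g_def F2_def idx_def zero_prod_def)
  ultimately show ?thesis by simp
qed



lemma sum_shift_le:
  fixes R :: "int \<times> int \<Rightarrow> real"
  assumes fin: "finite P" and sm: "(\<lambda>s. \<bar>R s\<bar>) summable_on UNIV" and inj: "inj_on h P"
  shows "(\<Sum>q\<in>P. \<bar>R (h q)\<bar>) \<le> infsum (\<lambda>s. \<bar>R s\<bar>) UNIV"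
proof -
  have "(\<Sum>q\<in>P. \<bar>R (h q)\<bar>) = (\<Sum>d\<in>h ` P. \<bar>R d\<bar>)"
    using sum.reindex[OF inj, of "\<lambda>d. \<bar>R d\<bar>"] by simp
  also have "\<dots> \<le> infsum (\<lambda>s. \<bar>R s\<bar>) UNIV"
    by (rule finite_sum_le_infsum) (use sm fin in auto)
  finally show ?thesis .
qed

lemma quad_bound:
  fixes R :: "int \<times> int \<Rightarrow> real" and c :: "int \<times> int \<Rightarrow> real"
  assumes fin: "finite P" and sm: "(\<lambda>s. \<bar>R s\<bar>) summable_on UNIV"
  shows "(\<Sum>p\<in>P. \<Sum>q\<in>P. c p * c q * R (q - p)) \<le> infsum (\<lambda>s. \<bar>R s\<bar>) UNIV * (\<Sum>p\<in>P. (c p)\<^sup>2)"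
proof -
  define S where "S = infsum (\<lambda>s. \<bar>R s\<bar>) UNIV"
  have A: "\<And>p. (\<Sum>q\<in>P. \<bar>R (q - p)\<bar>) \<le> S"
    unfolding S_def by (rule sum_shift_le[OF fin sm]) (auto simp: inj_on_def)
  have B: "\<And>q. (\<Sum>p\<in>P. \<bar>R (q - p)\<bar>) \<le> S"
    unfolding S_def by (rule sum_shift_le[OF fin sm]) (auto simp: inj_on_def)
  have e1: "(\<Sum>p\<in>P. \<Sum>q\<in>P. (c p)\<^sup>2 * \<bar>R (q - p)\<bar>) = (\<Sum>p\<in>P. (c p)\<^sup>2 * (\<Sum>q\<in>P. \<bar>R (q - p)\<bar>))"
    by (simp only: sum_distrib_left)
  have e2: "(\<Sum>p\<in>P. \<Sum>q\<in>P. (c q)\<^sup>2 * \<bar>R (q - p)\<bar>) = (\<Sum>q\<in>P. (c q)\<^sup>2 * (\<Sum>p\<in>P. \<bar>R (q - p)\<bar>))"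
    by (subst sum.swap) (simp only: sum_distrib_left)
  have trm: "c p * c q * R (q - p) \<le> ((c p)\<^sup>2 * \<bar>R (q - p)\<bar> + (c q)\<^sup>2 * \<bar>R (q - p)\<bar>) / 2" for p q
  proof -
    have "c p * c q * R (q - p) \<le> \<bar>c p * c q\<bar> * \<bar>R (q - p)\<bar>"
      by (metis abs_ge_self abs_mult)
    also have "\<bar>c p * c q\<bar> \<le> ((c p)\<^sup>2 + (c q)\<^sup>2) / 2"
    proof -
      have "0 \<le> (\<bar>c p\<bar> - \<bar>c q\<bar>)\<^sup>2" by simp
      then have "2 * (\<bar>c p\<bar> * \<bar>c q\<bar>) \<le> \<bar>c p\<bar>\<^sup>2 + \<bar>c q\<bar>\<^sup>2"
        by (simp add: power2_diff)
      then show ?thesis by (simp add: abs_mult)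
    qed
    then have "\<bar>c p * c q\<bar> * \<bar>R (q - p)\<bar> \<le> ((c p)\<^sup>2 + (c q)\<^sup>2) / 2 * \<bar>R (q - p)\<bar>"
      by (rule mult_right_mono) simp
    finally show ?thesis by (simp add: algebra_simps)
  qed
  have "(\<Sum>p\<in>P. \<Sum>q\<in>P. c p * c q * R (q - p)) \<le>
        (\<Sum>p\<in>P. \<Sum>q\<in>P. ((c p)\<^sup>2 * \<bar>R (q - p)\<bar> + (c q)\<^sup>2 * \<bar>R (q - p)\<bar>) / 2)"
    by (intro sum_mono trm)
  also have "\<dots> = ((\<Sum>p\<in>P. \<Sum>q\<in>P. (c p)\<^sup>2 * \<bar>R (q - p)\<bar>) + (\<Sum>p\<in>P. \<Sum>q\<in>P. (c q)\<^sup>2 * \<bar>R (q - p)\<bar>)) / 2"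
    by (simp only: sum_divide_distrib[symmetric] sum.distrib)
  also have "\<dots> = ((\<Sum>p\<in>P. (c p)\<^sup>2 * (\<Sum>q\<in>P. \<bar>R (q - p)\<bar>)) + (\<Sum>q\<in>P. (c q)\<^sup>2 * (\<Sum>p\<in>P. \<bar>R (q - p)\<bar>))) / 2"
    by (simp only: e1 e2)
  also have "\<dots> \<le> ((\<Sum>p\<in>P. (c p)\<^sup>2 * S) + (\<Sum>q\<in>P. (c q)\<^sup>2 * S)) / 2"
    using A B by (intro divide_right_mono add_mono sum_mono mult_left_mono) auto
  also have "\<dots> = S * (\<Sum>p\<in>P. (c p)\<^sup>2)"
    by (simp add: sum_distrib_right[symmetric])
  finally show ?thesis unfolding S_def .
qed



lemma lincomb_tail:
  fixes M :: "'a measure" and Z :: "int \<times> int \<Rightarrow> 'a \<Rightarrow> real" and \<theta> :: real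
    and R :: "int \<times> int \<Rightarrow> real" and c :: "int \<times> int \<Rightarrow> real"
  assumes P: "prob_space M" and th: "\<theta> > 0" and GP: "gaussian_process M Z" and St: "stationary_Z2 M Z"
    and EZ: "\<And>s. prob_space.expectation M (Z s) = \<theta>"
    and RD: "\<And>s. R s = prob_space.expectation M (\<lambda>\<omega>. (Z (0,0) \<omega> - \<theta>) * (Z s \<omega> - \<theta>))"
    and sm: "(\<lambda>s. \<bar>R s\<bar>) summable_on UNIV"
    and fin: "finite Q" and kp: "k > 0" and ap: "a > 0"
  shows "measure M {\<omega> \<in> space M. a < \<bar>\<Sum>p\<in>Q. c p * (Z p \<omega> - \<theta>)\<bar>}
     \<le> (real k * (infsum (\<lambda>s. \<bar>R s\<bar>) UNIV * (\<Sum>p\<in>Q. (c p)\<^sup>2)))^k / a^(2*k)"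
proof -
  interpret prob_space M by fact
  have GPc: "\<And>S c. finite S \<Longrightarrow> gaussian_rv M (\<lambda>\<omega>. \<Sum>s\<in>S. c s * Z s \<omega>)"
    using GP unfolding gaussian_process_def by blast
  have meas[measurable]: "\<And>i. Z i \<in> borel_measurable M" using GP unfolding gaussian_process_def by blast
  have gZ: "gaussian_rv M (Z p)" for p
  proof -
    have "gaussian_rv M (\<lambda>\<omega>. \<Sum>s\<in>{p}. (\<lambda>_. 1) s * Z s \<omega>)"
      by (rule GPc) simp
    then show ?thesis by simp
  qed
  have intZ: "integrable M (Z p)" for p
  proof (rule ccontr)
    assume "\<not> integrable M (Z p)"
    then have "expectation (Z p) = 0" by (rule not_integrable_integral_eq)
    then show False using EZ[of p] th by simp
  qed
  have gX: "gaussian_rv M (\<lambda>\<omega>. Z p \<omega> - \<theta>)" for p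
    using gauss_shift[OF P gZ[of p], of "-\<theta>"] by simp
  have EX: "expectation (\<lambda>\<omega>. Z p \<omega> - \<theta>) = 0" for p
    using intZ[of p] EZ[of p] prob_space by simp
  have int2: "integrable M (\<lambda>\<omega>. (Z p \<omega> - \<theta>)^2)" for p
    using gauss_moment[OF P gX EX, of 1] by simp
  have intXX: "integrable M (\<lambda>\<omega>. (Z p \<omega> - \<theta>) * (Z q \<omega> - \<theta>))" for p q
  proof (rule Bochner_Integration.integrable_bound)
    show "integrable M (\<lambda>\<omega>. (Z p \<omega> - \<theta>)^2 + (Z q \<omega> - \<theta>)^2)"
      using int2 by simp
    show "(\<lambda>\<omega>. (Z p \<omega> - \<theta>) * (Z q \<omega> - \<theta>)) \<in> borel_measurable M" by measurable
    show "AE \<omega> in M. norm ((Z p \<omega> - \<theta>) * (Z q \<omega> - \<theta>)) \<le> norm ((Z p \<omega> - \<theta>)^2 + (Z q \<omega> - \<theta>)^2)"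
    proof (intro AE_I2)
      fix \<omega>
      define u where "u = Z p \<omega> - \<theta>"
      define v where "v = Z q \<omega> - \<theta>"
      have "0 \<le> (\<bar>u\<bar> - \<bar>v\<bar>)\<^sup>2" by simp
      then have "2 * (\<bar>u\<bar> * \<bar>v\<bar>) \<le> \<bar>u\<bar>\<^sup>2 + \<bar>v\<bar>\<^sup>2" by (simp add: power2_diff)
      moreover have "0 \<le> \<bar>u\<bar> * \<bar>v\<bar>" by simp
      ultimately have "\<bar>u * v\<bar> \<le> u\<^sup>2 + v\<^sup>2" unfolding abs_mult power2_abs by linarith
      then show "norm ((Z p \<omega> - \<theta>) * (Z q \<omega> - \<theta>)) \<le> norm ((Z p \<omega> - \<theta>)^2 + (Z q \<omega> - \<theta>)^2)"
        unfolding u_def v_def by simp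
    qed
  qed
  define Y where "Y = (\<lambda>\<omega>. \<Sum>p\<in>Q. c p * (Z p \<omega> - \<theta>))"
  have Ym[measurable]: "Y \<in> borel_measurable M" unfolding Y_def by measurable
  have Yeq: "Y = (\<lambda>\<omega>. (\<Sum>p\<in>Q. c p * Z p \<omega>) + (- \<theta> * (\<Sum>p\<in>Q. c p)))"
    unfolding Y_def by (simp add: right_diff_distrib sum_subtractf sum_distrib_left mult.commute sum_negf)
  have gY: "gaussian_rv M Y"
  proof -
    have "gaussian_rv M (\<lambda>\<omega>. \<Sum>p\<in>Q. c p * Z p \<omega>)" using GPc fin by blast
    then show ?thesis unfolding Yeq by (rule gauss_shift[OF P])
  qed
  have EY: "expectation Y = 0"
  proof -
    have "expectation Y = (\<Sum>p\<in>Q. expectation (\<lambda>\<omega>. c p * (Z p \<omega> - \<theta>)))"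
      unfolding Y_def by (rule Bochner_Integration.integral_sum) (use intZ in simp)
    also have "\<dots> = 0" using EX by simp
    finally show ?thesis .
  qed
  have sq: "(Y \<omega>)^2 = (\<Sum>p\<in>Q. \<Sum>q\<in>Q. c p * c q * ((Z p \<omega> - \<theta>) * (Z q \<omega> - \<theta>)))" for \<omega>
    unfolding Y_def power2_eq_square sum_product by (simp add: algebra_simps)
  have EY2: "expectation (\<lambda>\<omega>. (Y \<omega>)^2) = (\<Sum>p\<in>Q. \<Sum>q\<in>Q. c p * c q * R (q - p))"
  proof -
    have "expectation (\<lambda>\<omega>. (Y \<omega>)^2) = expectation (\<lambda>\<omega>. \<Sum>p\<in>Q. \<Sum>q\<in>Q. c p * c q * ((Z p \<omega> - \<theta>) * (Z q \<omega> - \<theta>)))"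
      by (simp only: sq)
    also have "\<dots> = (\<Sum>p\<in>Q. expectation (\<lambda>\<omega>. \<Sum>q\<in>Q. c p * c q * ((Z p \<omega> - \<theta>) * (Z q \<omega> - \<theta>))))"
      by (rule Bochner_Integration.integral_sum) (use intXX in simp)
    also have "\<dots> = (\<Sum>p\<in>Q. \<Sum>q\<in>Q. expectation (\<lambda>\<omega>. c p * c q * ((Z p \<omega> - \<theta>) * (Z q \<omega> - \<theta>))))"
      by (intro sum.cong refl Bochner_Integration.integral_sum) (use intXX in simp)
    also have "\<dots> = (\<Sum>p\<in>Q. \<Sum>q\<in>Q. c p * c q * R (q - p))"
    proof (intro sum.cong refl)
      fix p q
      have "expectation (\<lambda>\<omega>. (Z p \<omega> - \<theta>) * (Z q \<omega> - \<theta>)) = R (q - p)"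
        using cov_stat[OF P meas St, of p \<theta> q] RD[of "q - p"] by simp
      then show "expectation (\<lambda>\<omega>. c p * c q * ((Z p \<omega> - \<theta>) * (Z q \<omega> - \<theta>))) = c p * c q * R (q - p)"
        by simp
    qed
    finally show ?thesis .
  qed
  have V: "expectation (\<lambda>\<omega>. (Y \<omega>)^2) \<le> infsum (\<lambda>s. \<bar>R s\<bar>) UNIV * (\<Sum>p\<in>Q. (c p)\<^sup>2)"
    unfolding EY2 by (rule quad_bound[OF fin sm])
  have V0: "0 \<le> expectation (\<lambda>\<omega>. (Y \<omega>)^2)" by (rule integral_nonneg_AE) auto
  have GM: "integrable M (\<lambda>\<omega>. Y \<omega> ^ (2*k)) \<and>
    expectation (\<lambda>\<omega>. Y \<omega> ^ (2*k)) \<le> (real k * expectation (\<lambda>\<omega>. Y \<omega> ^ 2))^k"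
    by (rule gauss_moment[OF P gY EY kp])
  have "measure M {\<omega> \<in> space M. a < \<bar>Y \<omega>\<bar>} \<le> measure M {\<omega> \<in> space M. a^(2*k) \<le> Y \<omega> ^ (2*k)}"
  proof (rule finite_measure_mono)
    show "{\<omega> \<in> space M. a < \<bar>Y \<omega>\<bar>} \<subseteq> {\<omega> \<in> space M. a^(2*k) \<le> Y \<omega> ^ (2*k)}"
    proof safe
      fix \<omega> assume "a < \<bar>Y \<omega>\<bar>"
      then have "a^(2*k) \<le> \<bar>Y \<omega>\<bar>^(2*k)" using ap by (intro power_mono) auto
      also have "\<bar>Y \<omega>\<bar>^(2*k) = Y \<omega> ^ (2*k)" by (rule power_even_abs) simp
      finally show "a^(2*k) \<le> Y \<omega> ^ (2*k)" .
    qed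
    show "{\<omega> \<in> space M. a^(2*k) \<le> Y \<omega> ^ (2*k)} \<in> sets M" by measurable
  qed
  also have "\<dots> \<le> expectation (\<lambda>\<omega>. Y \<omega> ^ (2*k)) / a^(2*k)"
  proof (rule integral_Markov_inequality_measure[where A="space M"])
    show "integrable M (\<lambda>\<omega>. Y \<omega> ^ (2*k))" using GM by blast
    show "AE \<omega> in M. 0 \<le> Y \<omega> ^ (2*k)" by (intro AE_I2 zero_le_even_power) simp
    show "0 < a^(2*k)" using ap by simp
  qed simp
  also have "\<dots> \<le> (real k * expectation (\<lambda>\<omega>. Y \<omega> ^ 2))^k / a^(2*k)"
    using GM ap by (intro divide_right_mono) auto
  also have "\<dots> \<le> (real k * (infsum (\<lambda>s. \<bar>R s\<bar>) UNIV * (\<Sum>p\<in>Q. (c p)\<^sup>2)))^k / a^(2*k)"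
    using V V0 ap by (intro divide_right_mono power_mono mult_left_mono) auto
  finally show ?thesis unfolding Y_def .
qed



lemma cs_abs:
  fixes a b :: "'i \<Rightarrow> real"
  shows "\<bar>\<Sum>i\<in>I. a i * b i\<bar> \<le> sqrt (\<Sum>i\<in>I. (a i)\<^sup>2) * sqrt (\<Sum>i\<in>I. (b i)\<^sup>2)"
proof -
  have "\<bar>\<Sum>i\<in>I. a i * b i\<bar> = sqrt ((\<Sum>i\<in>I. a i * b i)\<^sup>2)" by simp
  also have "\<dots> \<le> sqrt ((\<Sum>i\<in>I. (a i)\<^sup>2) * (\<Sum>i\<in>I. (b i)\<^sup>2))"
    by (rule real_sqrt_le_mono) (rule Cauchy_Schwarz_ineq_sum)
  also have "\<dots> = sqrt (\<Sum>i\<in>I. (a i)\<^sup>2) * sqrt (\<Sum>i\<in>I. (b i)\<^sup>2)" by (simp add: real_sqrt_mult)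
  finally show ?thesis .
qed

lemma opnorm_bound:
  fixes A :: "int \<Rightarrow> int \<Rightarrow> real" and V :: "(int \<Rightarrow> real) set" and N :: nat
  defines "I \<equiv> {1..int N}"
  assumes N: "N > 0" and tau: "\<tau> \<ge> 0"
    and near: "\<And>x. (\<Sum>j\<in>I. (x j)\<^sup>2) = 1 \<Longrightarrow> \<exists>v\<in>V. (\<Sum>j\<in>I. (x j - v j)\<^sup>2) \<le> 1/16"
    and small: "\<And>v. v \<in> V \<Longrightarrow> (\<Sum>j\<in>I. (v j)\<^sup>2) \<le> 9/4"
    and bil: "\<And>u v. u \<in> V \<Longrightarrow> v \<in> V \<Longrightarrow> \<bar>\<Sum>i\<in>I. \<Sum>j\<in>I. u i * A i j * v j\<bar> \<le> \<tau>"
  shows "op_norm N A \<le> 8 * \<tau> / 3"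
proof -
  define Ss where "Ss = {sqrt (\<Sum>i=1..int N. (\<Sum>j=1..int N. A i j * x j)\<^sup>2) | x :: int \<Rightarrow> real.
                        (\<Sum>j=1..int N. (x j)\<^sup>2) = 1}"
  have opn: "op_norm N A = Sup Ss" unfolding op_norm_def Ss_def ..
  have finI: "finite I" unfolding I_def by simp
  have oneI: "1 \<in> I" unfolding I_def using N by simp
  define x0 where "x0 = (\<lambda>j::int. if j = 1 then 1 else (0::real))"
  have "(\<Sum>j\<in>I. (x0 j)\<^sup>2) = (\<Sum>j\<in>I. if j = 1 then 1 else 0)"
    unfolding x0_def by (intro sum.cong) auto
  also have "\<dots> = 1" using finI oneI by simp
  finally have x0u: "(\<Sum>j\<in>I. (x0 j)\<^sup>2) = 1" .
  have ne: "Ss \<noteq> {}" unfolding Ss_def using x0u unfolding I_def by blast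
  define B where "B = sqrt (\<Sum>i\<in>I. \<Sum>j\<in>I. (A i j)\<^sup>2)"
  have elem_le: "s \<le> B" if "s \<in> Ss" for s
  proof -
    obtain x where s: "s = sqrt (\<Sum>i\<in>I. (\<Sum>j\<in>I. A i j * x j)\<^sup>2)" and xu: "(\<Sum>j\<in>I. (x j)\<^sup>2) = 1"
      using \<open>s \<in> Ss\<close> unfolding Ss_def I_def by blast
    have "(\<Sum>i\<in>I. (\<Sum>j\<in>I. A i j * x j)\<^sup>2) \<le> (\<Sum>i\<in>I. (\<Sum>j\<in>I. (A i j)\<^sup>2) * (\<Sum>j\<in>I. (x j)\<^sup>2))"
      by (intro sum_mono Cauchy_Schwarz_ineq_sum)
    then show ?thesis unfolding s B_def using xu by (simp add: real_sqrt_le_mono)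
  qed
  have bdd: "bdd_above Ss" using elem_le by (auto simp: bdd_above_def)
  define M where "M = Sup Ss"
  have elem_M: "s \<le> M" if "s \<in> Ss" for s unfolding M_def by (rule cSup_upper[OF that bdd])
  have M0: "0 \<le> M"
  proof -
    obtain s where "s \<in> Ss" using ne by blast
    moreover then have "0 \<le> s" unfolding Ss_def by (auto intro!: sum_nonneg)
    ultimately show ?thesis using elem_M by force
  qed
  have K1: "(\<Sum>i\<in>I. (\<Sum>j\<in>I. A i j * z j)\<^sup>2) \<le> M\<^sup>2 * (\<Sum>j\<in>I. (z j)\<^sup>2)" for z
  proof (cases "(\<Sum>j\<in>I. (z j)\<^sup>2) = 0")
    case True
    then have "\<forall>j\<in>I. (z j)\<^sup>2 = 0" using finI by (subst (asm) sum_nonneg_eq_0_iff) auto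
    then have "\<forall>i. (\<Sum>j\<in>I. A i j * z j) = 0" by simp
    then show ?thesis using True by simp
  next
    case False
    define r where "r = sqrt (\<Sum>j\<in>I. (z j)\<^sup>2)"
    have nn: "0 \<le> (\<Sum>j\<in>I. (z j)\<^sup>2)" by (intro sum_nonneg) auto
    then have r0: "r > 0" using False unfolding r_def by simp
    have r2: "r\<^sup>2 = (\<Sum>j\<in>I. (z j)\<^sup>2)" unfolding r_def using nn by simp
    define x where "x = (\<lambda>j. z j / r)"
    have "(\<Sum>j\<in>I. (x j)\<^sup>2) = (\<Sum>j\<in>I. (z j)\<^sup>2) / r\<^sup>2"
      unfolding x_def by (simp add: power_divide sum_divide_distrib)
    then have xu: "(\<Sum>j\<in>I. (x j)\<^sup>2) = 1" using r2 r0 False by simp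
    have Ax: "(\<Sum>j\<in>I. A i j * x j) = (\<Sum>j\<in>I. A i j * z j) / r" for i
      unfolding x_def by (simp add: sum_divide_distrib)
    have "sqrt (\<Sum>i\<in>I. (\<Sum>j\<in>I. A i j * x j)\<^sup>2) \<in> Ss" unfolding Ss_def I_def using xu[unfolded I_def] by blast
    then have "sqrt (\<Sum>i\<in>I. (\<Sum>j\<in>I. A i j * x j)\<^sup>2) \<le> M" by (rule elem_M)
    then have "(\<Sum>i\<in>I. (\<Sum>j\<in>I. A i j * x j)\<^sup>2) \<le> M\<^sup>2"
      using M0 by (metis real_le_rsqrt real_sqrt_le_iff sqrt_le_D)
    moreover have "(\<Sum>i\<in>I. (\<Sum>j\<in>I. A i j * x j)\<^sup>2) = (\<Sum>i\<in>I. (\<Sum>j\<in>I. A i j * z j)\<^sup>2) / r\<^sup>2"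
      unfolding Ax power_divide by (rule sum_divide_distrib[symmetric])
    ultimately have "(\<Sum>i\<in>I. (\<Sum>j\<in>I. A i j * z j)\<^sup>2) / r\<^sup>2 \<le> M\<^sup>2" by simp
    then show ?thesis using r0 r2 nn False by (simp add: divide_le_eq)
  qed
  have main: "s \<le> 4 * \<tau> / 3 + M / 2" if "s \<in> Ss" for s
  proof -
    obtain x where s: "s = sqrt (\<Sum>i\<in>I. (\<Sum>j\<in>I. A i j * x j)\<^sup>2)" and xu: "(\<Sum>j\<in>I. (x j)\<^sup>2) = 1"
      using \<open>s \<in> Ss\<close> unfolding Ss_def I_def by blast
    define y where "y = (\<lambda>i. \<Sum>j\<in>I. A i j * x j)"
    define \<nu> where "\<nu> = sqrt (\<Sum>i\<in>I. (y i)\<^sup>2)"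
    have nnY: "0 \<le> (\<Sum>i\<in>I. (y i)\<^sup>2)" by (intro sum_nonneg) auto
    have sv: "s = \<nu>" unfolding s \<nu>_def y_def ..
    show ?thesis
    proof (cases "\<nu> = 0")
      case True then show ?thesis using sv tau M0 by simp
    next
      case False
      then have \<nu>0: "\<nu> > 0" unfolding \<nu>_def using nnY by simp
      have \<nu>2: "\<nu>\<^sup>2 = (\<Sum>i\<in>I. (y i)\<^sup>2)" unfolding \<nu>_def using nnY by simp
      define yh where "yh = (\<lambda>i. y i / \<nu>)"
      have yhu: "(\<Sum>i\<in>I. (yh i)\<^sup>2) = 1"
        unfolding yh_def using \<nu>0 \<nu>2 by (simp add: power_divide sum_divide_distrib[symmetric]) (metis \<nu>0 \<nu>2 less_irrefl zero_less_power)
      obtain u where uV: "u \<in> V" and un: "(\<Sum>j\<in>I. (yh j - u j)\<^sup>2) \<le> 1/16" using near[OF yhu] by blast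
      obtain v where vV: "v \<in> V" and vn: "(\<Sum>j\<in>I. (x j - v j)\<^sup>2) \<le> 1/16" using near[OF xu] by blast
      define w where "w = (\<lambda>i. \<Sum>j\<in>I. A i j * (x j - v j))"
      have nu_eq: "\<nu> = (\<Sum>i\<in>I. yh i * y i)"
        unfolding yh_def using \<nu>0 \<nu>2 by (simp add: sum_divide_distrib[symmetric] power2_eq_square) (metis \<nu>0 less_irrefl nonzero_mult_div_cancel_right)
      have split: "(\<Sum>i\<in>I. yh i * y i) = (\<Sum>i\<in>I. \<Sum>j\<in>I. u i * A i j * v j)
            + (\<Sum>i\<in>I. (yh i - u i) * y i) + (\<Sum>i\<in>I. u i * w i)"
      proof -
        have "(\<Sum>i\<in>I. \<Sum>j\<in>I. u i * A i j * v j) + (\<Sum>i\<in>I. u i * w i) = (\<Sum>i\<in>I. u i * y i)"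
          unfolding w_def y_def
          by (simp add: sum.distrib[symmetric] sum_distrib_left[symmetric] algebra_simps sum_subtractf)
        moreover have "(\<Sum>i\<in>I. (yh i - u i) * y i) + (\<Sum>i\<in>I. u i * y i) = (\<Sum>i\<in>I. yh i * y i)"
          by (simp add: sum.distrib[symmetric] algebra_simps)
        ultimately show ?thesis by linarith
      qed
      have t1: "\<bar>\<Sum>i\<in>I. \<Sum>j\<in>I. u i * A i j * v j\<bar> \<le> \<tau>" by (rule bil[OF uV vV])
      have t2: "\<bar>\<Sum>i\<in>I. (yh i - u i) * y i\<bar> \<le> \<nu> / 4"
      proof -
        have "\<bar>\<Sum>i\<in>I. (yh i - u i) * y i\<bar> \<le> sqrt (\<Sum>i\<in>I. (yh i - u i)\<^sup>2) * \<nu>"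
          unfolding \<nu>_def by (rule cs_abs)
        also have "\<dots> \<le> sqrt (1/16) * \<nu>"
          using un \<nu>0 by (intro mult_right_mono real_sqrt_le_mono) auto
        also have "sqrt (1/16) = (1/4::real)" by (simp add: real_sqrt_divide)
        finally show ?thesis by simp
      qed
      have t3: "\<bar>\<Sum>i\<in>I. u i * w i\<bar> \<le> 3 * M / 8"
      proof -
        have "\<bar>\<Sum>i\<in>I. u i * w i\<bar> \<le> sqrt (\<Sum>i\<in>I. (u i)\<^sup>2) * sqrt (\<Sum>i\<in>I. (w i)\<^sup>2)"
          by (rule cs_abs)
        also have "\<dots> \<le> sqrt (9/4) * sqrt (M\<^sup>2 * (1/16))"
        proof (intro mult_mono real_sqrt_le_mono)
          show "(\<Sum>i\<in>I. (u i)\<^sup>2) \<le> 9/4" by (rule small[OF uV])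
          have "(\<Sum>i\<in>I. (w i)\<^sup>2) \<le> M\<^sup>2 * (\<Sum>j\<in>I. (x j - v j)\<^sup>2)" unfolding w_def by (rule K1)
          also have "\<dots> \<le> M\<^sup>2 * (1/16)" using vn by (intro mult_left_mono) auto
          finally show "(\<Sum>i\<in>I. (w i)\<^sup>2) \<le> M\<^sup>2 * (1/16)" .
        qed (auto intro!: sum_nonneg)
        also have "sqrt (9/4) * sqrt (M\<^sup>2 * (1/16)) = 3 * M / 8"
          using M0 by (simp add: real_sqrt_mult real_sqrt_divide)
        finally show ?thesis .
      qed
      have "\<nu> \<le> \<tau> + \<nu> / 4 + 3 * M / 8" using nu_eq split t1 t2 t3 by linarith
      then show ?thesis using sv by linarith
    qed
  qed
  have "M \<le> 4 * \<tau> / 3 + M / 2" unfolding M_def[symmetric] using cSup_least[OF ne main] M_def by simp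
  then show ?thesis using opn M_def by simp
qed



lemma geo_eq: "(\<Sum>z\<in>{- int n..int n}. (1/2::real)^nat \<bar>z\<bar>) = 3 - 2 * (1/2)^n"
proof (induction n)
  case 0 then show ?case by simp
next
  case (Suc n)
  have e: "{- int (Suc n)..int (Suc n)} = insert (int n + 1) (insert (- (int n + 1)) {- int n..int n})"
    by auto
  have "(\<Sum>z\<in>{- int (Suc n)..int (Suc n)}. (1/2::real)^nat \<bar>z\<bar>)
      = (1/2)^(Suc n) + (1/2)^(Suc n) + (\<Sum>z\<in>{- int n..int n}. (1/2::real)^nat \<bar>z\<bar>)"
    unfolding e by (simp add: nat_add_distrib)
  also have "\<dots> = 3 - 2 * (1/2)^(Suc n)" using Suc by simp
  finally show ?case .
qed

lemma geo3: "(\<Sum>z\<in>{-L..L}. (1/2::real)^nat \<bar>z\<bar>) \<le> 3"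
proof (cases "L < 0")
  case True then show ?thesis by simp
next
  case False
  then obtain n where "L = int n" by (metis nonneg_int_cases not_less)
  then show ?thesis using geo_eq[of n] by simp
qed

lemma net:
  fixes N :: nat
  assumes N: "N > 0"
  defines "I \<equiv> {1..int N}" and "m \<equiv> 2 * sqrt (real N)" and "L \<equiv> 3 * int N"
  defines "K \<equiv> {k \<in> PiE I (\<lambda>_. {-L..L}). (\<Sum>j\<in>I. (real_of_int (k j))\<^sup>2) \<le> 9 * real N}"
  shows "finite K" and "real (card K) \<le> 24 ^ N"
    and "\<And>k. k \<in> K \<Longrightarrow> (\<Sum>j\<in>I. (real_of_int (k j) / m)\<^sup>2) \<le> 9/4"
    and "\<And>x. (\<Sum>j\<in>I. (x j)\<^sup>2) = 1 \<Longrightarrow> \<exists>k\<in>K. (\<Sum>j\<in>I. (x j - real_of_int (k j) / m)\<^sup>2) \<le> 1/16"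
proof -
  have finI: "finite I" unfolding I_def by simp
  have cardI: "card I = N" unfolding I_def by simp
  have m0: "m > 0" unfolding m_def using N by simp
  have m2: "m\<^sup>2 = 4 * real N" unfolding m_def by (simp add: power_mult_distrib)
  have finP: "finite (PiE I (\<lambda>_. {-L..L}))" using finI by (intro finite_PiE) auto
  show finK: "finite K" unfolding K_def by (rule finite_subset[OF _ finP]) auto
  show "(\<Sum>j\<in>I. (real_of_int (k j) / m)\<^sup>2) \<le> 9/4" if "k \<in> K" for k
  proof -
    have "(\<Sum>j\<in>I. (real_of_int (k j) / m)\<^sup>2) = (\<Sum>j\<in>I. (real_of_int (k j))\<^sup>2) / m\<^sup>2"
      by (simp add: power_divide sum_divide_distrib)
    also have "\<dots> \<le> 9 * real N / m\<^sup>2"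
      using that m0 unfolding K_def by (intro divide_right_mono) auto
    also have "\<dots> = 9/4" unfolding m2 using N by simp
    finally show ?thesis .
  qed
  show "\<exists>k\<in>K. (\<Sum>j\<in>I. (x j - real_of_int (k j) / m)\<^sup>2) \<le> 1/16" if xu: "(\<Sum>j\<in>I. (x j)\<^sup>2) = 1" for x
  proof -
    define k where "k = restrict (\<lambda>j. round (x j * m)) I"
    have xj: "\<bar>x j\<bar> \<le> 1" if "j \<in> I" for j
    proof -
      have "(x j)\<^sup>2 \<le> (\<Sum>j\<in>I. (x j)\<^sup>2)" by (rule member_le_sum) (use that finI in auto)
      then have "(x j)\<^sup>2 \<le> 1\<^sup>2" using xu by simp
      then show ?thesis using abs_le_square_iff[of "x j" 1] by simp
    qed
    have ej: "\<bar>x j * m - real_of_int (k j)\<bar> \<le> 1/2" if "j \<in> I" for j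
    proof -
      have kj: "k j = round (x j * m)" using that by (simp add: k_def)
      show ?thesis unfolding kj abs_le_iff using of_int_round_ge[of "x j * m"] of_int_round_le[of "x j * m"] by linarith
    qed
    have sN: "sqrt (real N) \<le> real N"
    proof -
      have "real N \<le> (real N)\<^sup>2" using N by (simp add: power2_eq_square)
      then have "sqrt (real N) \<le> sqrt ((real N)\<^sup>2)" by (rule real_sqrt_le_mono)
      then show ?thesis by simp
    qed
    have kb: "\<bar>real_of_int (k j)\<bar> \<le> \<bar>x j\<bar> * m + 1/2" if "j \<in> I" for j
    proof -
      have "\<bar>x j * m\<bar> = \<bar>x j\<bar> * m" using m0 by (simp add: abs_mult)
      then show ?thesis using ej[OF that] by linarith
    qed
    have kL: "k j \<in> {-L..L}" if "j \<in> I" for j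
    proof -
      have "\<bar>real_of_int (k j)\<bar> \<le> 1 * m + 1/2"
      proof -
        have "\<bar>x j\<bar> * m \<le> 1 * m" using xj[OF that] m0 by (intro mult_right_mono) auto
        then show ?thesis using kb[OF that] by linarith
      qed
      also have "\<dots> \<le> 3 * real N" unfolding m_def using sN N by simp
      finally have "\<bar>k j\<bar> \<le> 3 * int N" by linarith
      then show ?thesis unfolding L_def by auto
    qed
    have k2: "(real_of_int (k j))\<^sup>2 \<le> 2 * (x j)\<^sup>2 * m\<^sup>2 + 1/2" if "j \<in> I" for j
    proof -
      have "(real_of_int (k j))\<^sup>2 = \<bar>real_of_int (k j)\<bar>\<^sup>2" by simp
      also have "\<dots> \<le> (\<bar>x j\<bar> * m + 1/2)\<^sup>2" by (rule power_mono[OF kb[OF that]]) simp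
      also have "\<dots> \<le> 2 * (x j)\<^sup>2 * m\<^sup>2 + 1/2"
      proof -
        have "0 \<le> (\<bar>x j\<bar> * m - 1/2)\<^sup>2" by simp
        then show ?thesis by (simp add: power2_eq_square algebra_simps)
      qed
      finally show ?thesis .
    qed
    have kK: "k \<in> K"
    proof -
      have "k \<in> PiE I (\<lambda>_. {-L..L})" unfolding k_def using kL by (auto simp: k_def)
      moreover have "(\<Sum>j\<in>I. (real_of_int (k j))\<^sup>2) \<le> 9 * real N"
      proof -
        have "(\<Sum>j\<in>I. (real_of_int (k j))\<^sup>2) \<le> (\<Sum>j\<in>I. 2 * m\<^sup>2 * (x j)\<^sup>2 + 1/2)"
          using k2 by (intro sum_mono) (simp add: algebra_simps)
        also have "\<dots> = 2 * m\<^sup>2 * (\<Sum>j\<in>I. (x j)\<^sup>2) + real N / 2"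
          by (simp add: sum.distrib sum_distrib_left[symmetric] cardI)
        also have "\<dots> = 8 * real N + real N / 2" using xu m2 by simp
        also have "\<dots> \<le> 9 * real N" by simp
        finally show ?thesis .
      qed
      ultimately show ?thesis unfolding K_def by blast
    qed
    have "(\<Sum>j\<in>I. (x j - real_of_int (k j) / m)\<^sup>2) \<le> (\<Sum>j\<in>I. (1/2)\<^sup>2 / m\<^sup>2)"
    proof (intro sum_mono)
      fix j assume jI: "j \<in> I"
      have "x j - real_of_int (k j) / m = (x j * m - real_of_int (k j)) / m" using m0 by (simp add: field_simps)
      then have "(x j - real_of_int (k j) / m)\<^sup>2 = \<bar>x j * m - real_of_int (k j)\<bar>\<^sup>2 / m\<^sup>2"
        by (simp add: power_divide)
      also have "\<dots> \<le> (1/2)\<^sup>2 / m\<^sup>2"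
        using ej[OF jI] by (intro divide_right_mono power_mono) auto
      finally show "(x j - real_of_int (k j) / m)\<^sup>2 \<le> (1/2)\<^sup>2 / m\<^sup>2" .
    qed
    also have "\<dots> = 1/16" using cardI m2 N by (simp add: power2_eq_square)
    finally show ?thesis using kK by blast
  qed
  define w where "w = (\<lambda>k::int\<Rightarrow>int. \<Prod>j\<in>I. (1/2::real)^nat \<bar>k j\<bar>)"
  have w0: "0 \<le> w k" for k unfolding w_def by (intro prod_nonneg) auto
  have wK: "1 \<le> 8^N * w k" if "k \<in> K" for k
  proof -
    have "\<bar>\<Sum>j\<in>I. \<bar>real_of_int (k j)\<bar> * 1\<bar> \<le> sqrt (\<Sum>j\<in>I. \<bar>real_of_int (k j)\<bar>\<^sup>2) * sqrt (\<Sum>j\<in>I. 1\<^sup>2)"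
      by (rule cs_abs)
    also have "\<dots> \<le> sqrt (9 * real N) * sqrt (real N)"
    proof -
      have "(\<Sum>j\<in>I. \<bar>real_of_int (k j)\<bar>\<^sup>2) \<le> 9 * real N" using that unfolding K_def by simp
      moreover have "(\<Sum>j\<in>I. (1::real)\<^sup>2) = real N" using cardI by simp
      ultimately show ?thesis by (simp add: real_sqrt_le_mono mult_right_mono)
    qed
    also have "\<dots> = 3 * real N" by (simp add: real_sqrt_mult)
    finally have s1: "(\<Sum>j\<in>I. \<bar>real_of_int (k j)\<bar>) \<le> 3 * real N" by simp
    have "real (\<Sum>j\<in>I. nat \<bar>k j\<bar>) = (\<Sum>j\<in>I. \<bar>real_of_int (k j)\<bar>)" by (simp add: of_nat_sum)
    with s1 have s2: "(\<Sum>j\<in>I. nat \<bar>k j\<bar>) \<le> 3 * N" by linarith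
    have "w k = (1/2::real)^(\<Sum>j\<in>I. nat \<bar>k j\<bar>)" unfolding w_def by (simp add: power_sum)
    also have "\<dots> \<ge> (1/2)^(3*N)" by (rule power_decreasing[OF s2]) auto
    finally have "(1/2::real)^(3*N) \<le> w k" .
    then have "8^N * (1/2::real)^(3*N) \<le> 8^N * w k" by (intro mult_left_mono) auto
    moreover have "8^N * (1/2::real)^(3*N) = 1" by (simp add: power_mult power_one_over)
    ultimately show ?thesis by simp
  qed
  have "real (card K) = (\<Sum>k\<in>K. 1)" by simp
  also have "\<dots> \<le> (\<Sum>k\<in>K. 8^N * w k)" using wK by (intro sum_mono) auto
  also have "\<dots> \<le> (\<Sum>k\<in>PiE I (\<lambda>_. {-L..L}). 8^N * w k)"
    using finP w0 by (intro sum_mono2) (auto simp: K_def)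
  also have "\<dots> = 8^N * (\<Prod>j\<in>I. \<Sum>z\<in>{-L..L}. (1/2::real)^nat \<bar>z\<bar>)"
    unfolding w_def sum_distrib_left[symmetric]
    using prod_sum_PiE[OF finI, of "\<lambda>_. {-L..L}" "\<lambda>_ z. (1/2::real)^nat \<bar>z\<bar>"] by simp
  also have "\<dots> \<le> 8^N * (\<Prod>j\<in>I. 3)"
    using geo3 by (intro mult_left_mono prod_mono) (auto intro: sum_nonneg)
  also have "\<dots> = 24^N" using cardI by (simp add: power_mult_distrib[symmetric])
  finally show "real (card K) \<le> 24 ^ N" .
qed



lemma bil_rewrite:
  fixes u v :: "int \<Rightarrow> real" and X :: "int \<times> int \<Rightarrow> real"
  shows "(\<Sum>i\<in>I. \<Sum>j\<in>I. u i * (X (i,j) + X (j,i)) * v j) =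
         (\<Sum>p\<in>I \<times> I. (case p of (i,j) \<Rightarrow> u i * v j + u j * v i) * X p)"
proof -
  have "(\<Sum>i\<in>I. \<Sum>j\<in>I. u i * (X (i,j) + X (j,i)) * v j) =
        (\<Sum>i\<in>I. \<Sum>j\<in>I. u i * v j * X (i,j)) + (\<Sum>i\<in>I. \<Sum>j\<in>I. u i * v j * X (j,i))"
    by (simp add: sum.distrib[symmetric] algebra_simps)
  also have "(\<Sum>i\<in>I. \<Sum>j\<in>I. u i * v j * X (j,i)) = (\<Sum>i\<in>I. \<Sum>j\<in>I. u j * v i * X (i,j))"
    by (rule sum.swap)
  also have "(\<Sum>i\<in>I. \<Sum>j\<in>I. u i * v j * X (i,j)) + (\<Sum>i\<in>I. \<Sum>j\<in>I. u j * v i * X (i,j)) =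
        (\<Sum>i\<in>I. \<Sum>j\<in>I. (u i * v j + u j * v i) * X (i,j))"
    by (simp add: sum.distrib[symmetric] algebra_simps)
  also have "\<dots> = (\<Sum>p\<in>I \<times> I. (case p of (i,j) \<Rightarrow> u i * v j + u j * v i) * X p)"
    unfolding sum.cartesian_product by (intro sum.cong) auto
  finally show ?thesis .
qed

lemma csq_bound:
  fixes u v :: "int \<Rightarrow> real"
  assumes "finite I"
  shows "(\<Sum>p\<in>I \<times> I. ((case p of (i,j) \<Rightarrow> u i * v j + u j * v i))\<^sup>2) \<le>
         4 * (\<Sum>i\<in>I. (u i)\<^sup>2) * (\<Sum>i\<in>I. (v i)\<^sup>2)"
proof -
  have "(\<Sum>p\<in>I \<times> I. ((case p of (i,j) \<Rightarrow> u i * v j + u j * v i))\<^sup>2) =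
        (\<Sum>i\<in>I. \<Sum>j\<in>I. (u i * v j + u j * v i)\<^sup>2)"
    unfolding sum.cartesian_product by (intro sum.cong) auto
  also have "\<dots> \<le> (\<Sum>i\<in>I. \<Sum>j\<in>I. 2 * ((u i)\<^sup>2 * (v j)\<^sup>2) + 2 * ((u j)\<^sup>2 * (v i)\<^sup>2))"
  proof (intro sum_mono)
    fix i j
    have "0 \<le> (u i * v j - u j * v i)\<^sup>2" by simp
    then show "(u i * v j + u j * v i)\<^sup>2 \<le> 2 * ((u i)\<^sup>2 * (v j)\<^sup>2) + 2 * ((u j)\<^sup>2 * (v i)\<^sup>2)"
      by (simp add: power2_eq_square algebra_simps)
  qed
  also have "\<dots> = 2 * (\<Sum>i\<in>I. \<Sum>j\<in>I. (u i)\<^sup>2 * (v j)\<^sup>2) + 2 * (\<Sum>i\<in>I. \<Sum>j\<in>I. (u j)\<^sup>2 * (v i)\<^sup>2)"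
    by (simp add: sum.distrib sum_distrib_left)
  also have "(\<Sum>i\<in>I. \<Sum>j\<in>I. (u j)\<^sup>2 * (v i)\<^sup>2) = (\<Sum>i\<in>I. \<Sum>j\<in>I. (u i)\<^sup>2 * (v j)\<^sup>2)"
    by (rule sum.swap)
  also have "(\<Sum>i\<in>I. \<Sum>j\<in>I. (u i)\<^sup>2 * (v j)\<^sup>2) = (\<Sum>i\<in>I. (u i)\<^sup>2) * (\<Sum>i\<in>I. (v i)\<^sup>2)"
    by (simp add: sum_product)
  finally show ?thesis by simp
qed

lemma perN:
  fixes M :: "'a measure" and Z :: "int \<times> int \<Rightarrow> 'a \<Rightarrow> real" and \<theta> :: real
    and R :: "int \<times> int \<Rightarrow> real"
  assumes P: "prob_space M" and th: "\<theta> > 0" and GP: "gaussian_process M Z" and St: "stationary_Z2 M Z"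
    and EZ: "\<And>s. prob_space.expectation M (Z s) = \<theta>"
    and RD: "\<And>s. R s = prob_space.expectation M (\<lambda>\<omega>. (Z (0,0) \<omega> - \<theta>) * (Z s \<omega> - \<theta>))"
    and sm: "(\<lambda>s. \<bar>R s\<bar>) summable_on UNIV"
    and N: "N > 0" and t: "t > 0"
  shows "measure M {\<omega> \<in> space M. op_norm N (\<lambda>i j. (Z (i,j) \<omega> - \<theta>) + (Z (j,i) \<omega> - \<theta>)) > t * sqrt (real N)}
     \<le> (82944 * infsum (\<lambda>s. \<bar>R s\<bar>) UNIV / t\<^sup>2) ^ N"
proof -
  interpret prob_space M by fact
  have meas[measurable]: "\<And>i. Z i \<in> borel_measurable M" using GP unfolding gaussian_process_def by blast
  define S where "S = infsum (\<lambda>s. \<bar>R s\<bar>) UNIV"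
  have S0: "0 \<le> S" unfolding S_def by (rule infsum_nonneg) auto
  define I where "I = {1..int N}"
  define m where "m = 2 * sqrt (real N)"
  define L where "L = 3 * int N"
  define K where "K = {k \<in> PiE I (\<lambda>_. {-L..L}). (\<Sum>j\<in>I. (real_of_int (k j))\<^sup>2) \<le> 9 * real N}"
  have finI: "finite I" unfolding I_def by simp
  note NET = net[OF N, folded I_def m_def L_def, folded K_def]
  define vk where "vk = (\<lambda>k::int\<Rightarrow>int. \<lambda>j. real_of_int (k j) / m)"
  define V where "V = vk ` K"
  define \<tau> where "\<tau> = 3 * t * sqrt (real N) / 8"
  have tau0: "\<tau> > 0" unfolding \<tau>_def using t N by simp
  define W where "W = (\<lambda>\<omega> i j. (Z (i,j) \<omega> - \<theta>) + (Z (j,i) \<omega> - \<theta>))"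
  define B where "B = (\<lambda>k l \<omega>. \<Sum>i\<in>I. \<Sum>j\<in>I. vk k i * W \<omega> i j * vk l j)"
  define Ev where "Ev = (\<lambda>kl. {\<omega> \<in> space M. \<tau> < \<bar>B (fst kl) (snd kl) \<omega>\<bar>})"
  define E where "E = {\<omega> \<in> space M. op_norm N (W \<omega>) > t * sqrt (real N)}"
  have sub: "E \<subseteq> (\<Union>kl\<in>K \<times> K. Ev kl)"
  proof
    fix \<omega> assume "\<omega> \<in> E"
    then have om: "\<omega> \<in> space M" and gt: "op_norm N (W \<omega>) > t * sqrt (real N)" unfolding E_def by auto
    show "\<omega> \<in> (\<Union>kl\<in>K \<times> K. Ev kl)"
    proof (rule ccontr)
      assume "\<omega> \<notin> (\<Union>kl\<in>K \<times> K. Ev kl)"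
      then have allle: "\<And>k l. k \<in> K \<Longrightarrow> l \<in> K \<Longrightarrow> \<bar>B k l \<omega>\<bar> \<le> \<tau>"
        using om unfolding Ev_def by force
      have "op_norm N (W \<omega>) \<le> 8 * \<tau> / 3"
      proof (rule opnorm_bound[OF N, where V=V])
        show "0 \<le> \<tau>" using tau0 by simp
        show "\<exists>v\<in>V. (\<Sum>j = 1..int N. (x j - v j)\<^sup>2) \<le> 1/16" if "(\<Sum>j = 1..int N. (x j)\<^sup>2) = 1" for x
          using NET(4)[of x] that unfolding V_def vk_def I_def by auto
        show "(\<Sum>j = 1..int N. (v j)\<^sup>2) \<le> 9/4" if "v \<in> V" for v
          using NET(3) that unfolding V_def vk_def I_def by auto
        show "\<bar>\<Sum>i = 1..int N. \<Sum>j = 1..int N. u i * W \<omega> i j * v j\<bar> \<le> \<tau>" if "u \<in> V" "v \<in> V" for u v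
          using that allle unfolding V_def B_def I_def by auto
      qed
      also have "8 * \<tau> / 3 = t * sqrt (real N)" unfolding \<tau>_def by simp
      finally show False using gt by simp
    qed
  qed
  have Evm: "Ev kl \<in> sets M" for kl unfolding Ev_def B_def W_def by measurable
  have each: "measure M (Ev kl) \<le> (144 * S / t\<^sup>2) ^ N" if klK: "kl \<in> K \<times> K" for kl
  proof -
    obtain k l where kl: "kl = (k,l)" "k \<in> K" "l \<in> K" using klK by (cases kl) auto
    define u where "u = vk k"
    define v where "v = vk l"
    define c where "c = (\<lambda>p. case p of (i,j) \<Rightarrow> u i * v j + u j * v i)"
    have Beq: "B k l \<omega> = (\<Sum>p\<in>I \<times> I. c p * (Z p \<omega> - \<theta>))" for \<omega>
      unfolding B_def W_def c_def u_def[symmetric] v_def[symmetric]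
      by (rule bil_rewrite[where X="\<lambda>p. Z p \<omega> - \<theta>"])
    have u2: "(\<Sum>i\<in>I. (u i)\<^sup>2) \<le> 9/4" using NET(3)[OF kl(2)] unfolding u_def vk_def .
    have v2: "(\<Sum>i\<in>I. (v i)\<^sup>2) \<le> 9/4" using NET(3)[OF kl(3)] unfolding v_def vk_def .
    have c2: "(\<Sum>p\<in>I \<times> I. (c p)\<^sup>2) \<le> 81/4"
    proof -
      have "(\<Sum>p\<in>I \<times> I. (c p)\<^sup>2) \<le> 4 * (\<Sum>i\<in>I. (u i)\<^sup>2) * (\<Sum>i\<in>I. (v i)\<^sup>2)"
        unfolding c_def by (rule csq_bound[OF finI])
      also have "\<dots> \<le> 4 * (9/4) * (9/4)"
        using u2 v2 by (intro mult_mono) (auto intro: sum_nonneg)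
      finally show ?thesis by simp
    qed
    have "measure M (Ev kl) = measure M {\<omega> \<in> space M. \<tau> < \<bar>\<Sum>p\<in>I \<times> I. c p * (Z p \<omega> - \<theta>)\<bar>}"
      unfolding Ev_def kl(1) by (simp add: Beq)
    also have "\<dots> \<le> (real N * (S * (\<Sum>p\<in>I \<times> I. (c p)\<^sup>2)))^N / \<tau>^(2*N)"
      unfolding S_def by (rule lincomb_tail[OF P th GP St EZ RD sm]) (use finI N tau0 in auto)
    also have "\<dots> \<le> (real N * (S * (81/4)))^N / \<tau>^(2*N)"
      using c2 S0 tau0 by (intro divide_right_mono power_mono mult_left_mono) (auto intro!: mult_nonneg_nonneg sum_nonneg)
    also have "\<tau>^(2*N) = (\<tau>\<^sup>2)^N" by (simp add: power_mult)
    also have "(real N * (S * (81/4)))^N / (\<tau>\<^sup>2)^N = (real N * (S * (81/4)) / \<tau>\<^sup>2)^N"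
      by (simp add: power_divide)
    also have "real N * (S * (81/4)) / \<tau>\<^sup>2 = 144 * S / t\<^sup>2"
      unfolding \<tau>_def using N t by (simp add: power_mult_distrib power_divide field_simps)
    finally show ?thesis .
  qed
  have "measure M E \<le> measure M (\<Union>kl\<in>K \<times> K. Ev kl)"
  proof (cases "E \<in> sets M")
    case True
    then show ?thesis using sub Evm NET(1) by (intro finite_measure_mono) auto
  next
    case False
    then show ?thesis by (simp add: measure_notin_sets)
  qed
  also have "\<dots> \<le> (\<Sum>kl\<in>K \<times> K. measure M (Ev kl))"
    using NET(1) Evm by (intro finite_measure_subadditive_finite) auto
  also have "\<dots> \<le> (\<Sum>kl\<in>K \<times> K. (144 * S / t\<^sup>2) ^ N)"
    using each by (intro sum_mono) auto
  also have "\<dots> = real (card K) * real (card K) * (144 * S / t\<^sup>2) ^ N"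
    by (simp add: card_cartesian_product)
  also have "\<dots> \<le> 24^N * 24^N * (144 * S / t\<^sup>2) ^ N"
    using NET(2) S0 by (intro mult_right_mono mult_mono) auto
  also have "\<dots> = (82944 * S / t\<^sup>2) ^ N"
    by (simp add: power_mult_distrib[symmetric])
  finally show ?thesis unfolding E_def W_def S_def .
qed



theorem lemma1:
  fixes M :: "'a measure" and Z :: "int \<times> int \<Rightarrow> 'a \<Rightarrow> real" and \<theta> :: real
    and R :: "int \<times> int \<Rightarrow> real"
  assumes "prob_space M"
    and "\<theta> > 0"
    and "gaussian_process M Z"
    and "stationary_Z2 M Z"
    and "\<And>s. prob_space.expectation M (Z s) = \<theta>"
    and "\<And>s. R s = prob_space.expectation M (\<lambda>\<omega>. (Z (0,0) \<omega> - \<theta>) * (Z s \<omega> - \<theta>))"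
    and "(\<lambda>s. \<bar>R s\<bar>) summable_on UNIV"
    and "infsum R UNIV \<noteq> 0"
  shows "((\<lambda>t. SUP N\<in>{1::nat..}. measure M
            {\<omega> \<in> space M. op_norm N (\<lambda>i j. (Z (i,j) \<omega> - \<theta>) + (Z (j,i) \<omega> - \<theta>)) > t * sqrt (real N)})
          \<longlongrightarrow> 0) at_top"
proof -
  interpret prob_space M by fact
  define S where "S = infsum (\<lambda>s. \<bar>R s\<bar>) UNIV"
  define r where "r = (\<lambda>t::real. 82944 * S / t\<^sup>2)"
  define P where "P = (\<lambda>t N. measure M
            {\<omega> \<in> space M. op_norm N (\<lambda>i j. (Z (i,j) \<omega> - \<theta>) + (Z (j,i) \<omega> - \<theta>)) > t * sqrt (real N)})"
  have S0: "0 \<le> S" unfolding S_def by (rule infsum_nonneg) auto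
  have rlim: "(r \<longlongrightarrow> 0) at_top" unfolding r_def by real_asymp
  have ev1: "eventually (\<lambda>t. r t < 1) at_top"
    using order_tendstoD(2)[OF rlim, of 1] by simp
  have ev2: "eventually (\<lambda>t::real. t > 0) at_top" by (rule eventually_gt_at_top)
  have bdd: "bdd_above (P t ` {1..})" for t
    unfolding P_def by (rule bdd_aboveI[where M=1]) auto
  have upper: "eventually (\<lambda>t. (SUP N\<in>{1::nat..}. P t N) \<le> r t) at_top"
    using ev1 ev2
  proof eventually_elim
    case (elim t)
    show ?case
    proof (rule cSUP_least)
      show "{1::nat..} \<noteq> {}" by auto
      fix N :: nat assume "N \<in> {1..}"
      then have N: "N > 0" by simp
      have "P t N \<le> (82944 * S / t\<^sup>2) ^ N"
        unfolding P_def S_def by (rule perN[OF assms(1-7) N elim(2)])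
      also have "\<dots> = r t ^ N" unfolding r_def ..
      also have "\<dots> \<le> r t ^ 1"
        using N elim S0 by (intro power_decreasing) (auto simp: r_def)
      finally show "P t N \<le> r t" by simp
    qed
  qed
  have lower: "eventually (\<lambda>t. 0 \<le> (SUP N\<in>{1::nat..}. P t N)) at_top"
  proof (intro always_eventually allI)
    fix t
    have "0 \<le> P t 1" unfolding P_def by simp
    also have "P t 1 \<le> (SUP N\<in>{1::nat..}. P t N)" by (rule cSUP_upper[OF _ bdd]) auto
    finally show "0 \<le> (SUP N\<in>{1::nat..}. P t N)" .
  qed
  have "((\<lambda>t. SUP N\<in>{1::nat..}. P t N) \<longlongrightarrow> 0) at_top"
    by (rule tendsto_sandwich[OF lower upper tendsto_const rlim])
  then show ?thesis unfolding P_def .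
qed

end
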